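(* Let $\mathbb K$ be a field of characteristic $\ne2$, $D\in\mathbb K[X]$ non-square of even degree with leading coefficient a square, and $\sqrt D\in\mathbb K((X^{-1}))$ fixed. Let $\alpha\in\mathbb K(X,\sqrt D)\subset\mathbb K((X^{-1}))$ be $\sigma$-reduced with $\alpha+\sigma(\alpha)\in\mathbb K[X]$. If the continued fraction of $\alpha$ is quasi-periodic, then it is pure periodic, i.e. there is $l\ge1$ with $a_n=a_{n+l}$ for all $n\ge0$.
   Context: $\operatorname{ord}$ is the valuation on $\mathbb K((X^{-1}))$ with $\operatorname{ord}(\sum_{n\le N}t_nX^n)=-N$ if $t_N\ne0$; $\lfloor\beta\rfloor$ is the unique polynomial with $\operatorname{ord}(\beta-\lfloor\beta\rfloor)>0$. Continued fraction: $\alpha_0=\alpha$, $\alpha_{n+1}=1/(\alpha_n-\lfloor\alpha_n\rfloor)$, $a_n=\lfloor\alpha_n\rfloor$. $\sigma$ is the nontrivial $\mathbb K(X)$-automorphism of $\mathbb K(X,\sqrt D)$, $\sigma(\sqrt D)=-\sqrt D$. An element $\alpha\in\mathbb K(X,\sqrt D)$ is $\sigma$-reduced if $\operatorname{ord}(\sigma(\alpha))>0>\operatorname{ord}(\alpha)$. Quasi-periodic: there exist $m\ge0$, $l\ge1$, $\mu\in\mathbb K^*$ with $a_n=\mu^{(-1)^n}a_{n+l}$ for all $n\ge m$. *)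

theory Defs
  imports "HOL-Computational_Algebra.Polynomial" "HOL-Computational_Algebra.Formal_Laurent_Series"
begin

text \<open>Model of K((X^-1)): the type 'a fls of formal Laurent series in a variable T
  (finitely many negative powers of T), with T playing the role of X^-1.
  Thus the polynomial variable X is fls_X_inv, and ord is fls_subdegree.\<close>

definition poly_fls :: "'a::field poly \<Rightarrow> 'a fls" where
  "poly_fls p = poly (map_poly fls_const p) fls_X_inv"

definition polys_fls :: "'a::field fls set" where
  "polys_fls = range poly_fls"

definition ratfun_fls :: "'a::field fls set" where
  "ratfun_fls = {poly_fls p / poly_fls q | p q. q \<noteq> 0}"

definition ord_pos :: "'a::field fls \<Rightarrow> bool" where
  "ord_pos f \<longleftrightarrow> f = 0 \<or> 0 < fls_subdegree f"

definition ord_neg :: "'a::field fls \<Rightarrow> bool" where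
  "ord_neg f \<longleftrightarrow> f \<noteq> 0 \<and> fls_subdegree f < 0"

text \<open>K(X, sqrt D), where s is the fixed square root of D\<close>
definition quad_field :: "'a::field fls \<Rightarrow> 'a fls set" where
  "quad_field s = {a + b * s | a b. a \<in> ratfun_fls \<and> b \<in> ratfun_fls}"

definition sigma :: "'a::field fls \<Rightarrow> 'a fls \<Rightarrow> 'a fls" where
  "sigma s \<alpha> = (THE \<beta>. \<exists>a\<in>ratfun_fls. \<exists>b\<in>ratfun_fls. \<alpha> = a + b * s \<and> \<beta> = a - b * s)"

definition sigma_reduced :: "'a::field fls \<Rightarrow> 'a fls \<Rightarrow> bool" where
  "sigma_reduced s \<alpha> \<longleftrightarrow> ord_pos (sigma s \<alpha>) \<and> ord_neg \<alpha>"

definition fls_floor :: "'a::field fls \<Rightarrow> 'a fls" where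
  "fls_floor f = (THE g. g \<in> polys_fls \<and> ord_pos (f - g))"

primrec cf_alpha :: "'a::field fls \<Rightarrow> nat \<Rightarrow> 'a fls" where
  "cf_alpha \<alpha> 0 = \<alpha>"
| "cf_alpha \<alpha> (Suc n) = inverse (cf_alpha \<alpha> n - fls_floor (cf_alpha \<alpha> n))"

definition cf_a :: "'a::field fls \<Rightarrow> nat \<Rightarrow> 'a fls" where
  "cf_a \<alpha> n = fls_floor (cf_alpha \<alpha> n)"

definition quasi_periodic :: "'a::field fls \<Rightarrow> bool" where
  "quasi_periodic \<alpha> \<longleftrightarrow> (\<exists>m l (\<mu>::'a). l \<ge> 1 \<and> \<mu> \<noteq> 0 \<and>
     (\<forall>n\<ge>m. cf_a \<alpha> n = fls_const (\<mu> powi ((-1) ^ n)) * cf_a \<alpha> (n + l)))"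

end

theory Submission
  imports Defs
begin



lemma poly_fls_pCons: "poly_fls (pCons a p) = fls_const a + fls_X_inv * poly_fls p"
  unfolding poly_fls_def by (simp add: map_poly_pCons)

lemma poly_fls_nth: "fls_nth (poly_fls p) n = (if n \<le> 0 then coeff p (nat (-n)) else 0)"
proof (induction p arbitrary: n)
  case 0
  then show ?case by (simp add: poly_fls_def)
next
  case (pCons a p)
  show ?case
    by (auto simp: poly_fls_pCons fls_X_inv_times_conv_shift pCons.IH coeff_pCons
        split: nat.splits) (auto simp: nat_diff_distrib' nat_add_distrib)
qed



lemma poly_fls_add: "poly_fls (p + q) = poly_fls p + poly_fls q"
  by (rule fls_eqI) (simp add: poly_fls_nth)
lemma poly_fls_diff: "poly_fls (p - q) = poly_fls p - poly_fls q"
  by (rule fls_eqI) (simp add: poly_fls_nth)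
lemma poly_fls_smult: "poly_fls (smult c q) = fls_const c * poly_fls q"
  by (rule fls_eqI) (simp add: poly_fls_nth)
lemma poly_fls_0[simp]: "poly_fls 0 = 0"
  by (rule fls_eqI) (simp add: poly_fls_nth)
lemma poly_fls_const: "poly_fls [:c:] = fls_const c"
  by (rule fls_eqI) (auto simp: poly_fls_nth coeff_pCons split: nat.splits)
lemma poly_fls_1[simp]: "poly_fls 1 = 1"
  using poly_fls_const[of 1] by (simp add: one_pCons)
lemma poly_fls_pCons0: "poly_fls (pCons 0 p) = fls_X_inv * poly_fls p"
  by (simp add: poly_fls_pCons)
lemma poly_fls_mult: "poly_fls (p * q) = poly_fls p * poly_fls q"
proof (induction p)
  case 0 then show ?case by simp
next
  case (pCons a p)
  show ?case
    by (simp add: mult_pCons_left poly_fls_add poly_fls_smult poly_fls_pCons0 pCons.IH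
        poly_fls_pCons algebra_simps)
qed
lemma poly_fls_inj: "poly_fls p = poly_fls q \<Longrightarrow> p = q"
proof (rule poly_eqI)
  fix n assume "poly_fls p = poly_fls q"
  hence "fls_nth (poly_fls p) (- int n) = fls_nth (poly_fls q) (- int n)" by simp
  thus "coeff p n = coeff q n" by (simp add: poly_fls_nth)
qed
lemma poly_fls_eq0: "poly_fls p = 0 \<longleftrightarrow> p = 0"
  using poly_fls_inj[of p 0] by auto

lemma polys_fls_iff: "f \<in> polys_fls \<longleftrightarrow> (\<forall>n>0. fls_nth f n = 0)"
proof
  assume "f \<in> polys_fls" then show "\<forall>n>0. fls_nth f n = 0"
    by (auto simp: polys_fls_def poly_fls_nth)
next
  assume h: "\<forall>n>0. fls_nth f n = 0"
  have "f = poly_fls (fls_prpart f + [:fls_nth f 0:])"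
  proof (rule fls_eqI)
    fix n show "fls_nth f n = fls_nth (poly_fls (fls_prpart f + [:fls_nth f 0:])) n"
      using h by (auto simp: poly_fls_nth coeff_pCons split: nat.splits)
  qed
  then show "f \<in> polys_fls" unfolding polys_fls_def by blast
qed

lemma ord_pos_iff: "ord_pos f \<longleftrightarrow> (\<forall>n\<le>0. fls_nth f n = 0)"
proof
  assume "ord_pos f" then show "\<forall>n\<le>0. fls_nth f n = 0"
    unfolding ord_pos_def by auto
next
  assume h: "\<forall>n\<le>0. fls_nth f n = 0"
  show "ord_pos f" unfolding ord_pos_def
  proof (cases "f = 0")
    case False
    then have "fls_nth f (fls_subdegree f) \<noteq> 0" by simp
    with h show "f = 0 \<or> 0 < fls_subdegree f" by force
  qed simp
qed

lemma ord_neg_iff: "ord_neg f \<longleftrightarrow> (\<exists>n<0. fls_nth f n \<noteq> 0)"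
proof
  assume "ord_neg f" then show "\<exists>n<0. fls_nth f n \<noteq> 0"
    unfolding ord_neg_def by (intro exI[of _ "fls_subdegree f"]) auto
next
  assume "\<exists>n<0. fls_nth f n \<noteq> 0"
  then obtain n where "n < 0" "fls_nth f n \<noteq> 0" by blast
  then show "ord_neg f" unfolding ord_neg_def
    using fls_subdegree_leI[of f n] by auto
qed

definition flr :: "'a::field fls \<Rightarrow> 'a fls" where
  "flr f = poly_fls (fls_prpart f + [:fls_nth f 0:])"

lemma flr_nth: "fls_nth (flr f) n = (if n \<le> 0 then fls_nth f n else 0)"
  by (auto simp: flr_def poly_fls_nth coeff_pCons split: nat.splits)

lemma fls_floor_eq: "fls_floor f = flr f"
  unfolding fls_floor_def
proof (rule the_equality)
  show "flr f \<in> polys_fls \<and> ord_pos (f - flr f)"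
    by (auto simp: polys_fls_iff ord_pos_iff flr_nth)
next
  fix g assume g: "g \<in> polys_fls \<and> ord_pos (f - g)"
  show "g = flr f"
  proof (rule fls_eqI)
    fix n show "fls_nth g n = fls_nth (flr f) n"
      using g by (cases "n \<le> 0") (auto simp: polys_fls_iff ord_pos_iff flr_nth)
  qed
qed

lemma fls_floor_nth: "fls_nth (fls_floor f) n = (if n \<le> 0 then fls_nth f n else 0)"
  by (simp add: fls_floor_eq flr_nth)




lemma R_poly: "poly_fls p \<in> ratfun_fls"
  unfolding ratfun_fls_def by (rule CollectI, rule exI[of _ p], rule exI[of _ 1]) simp
lemma R_const: "fls_const c \<in> ratfun_fls"
  using R_poly[of "[:c:]"] by (simp add: poly_fls_const)
lemma R_polys: "p \<in> polys_fls \<Longrightarrow> p \<in> ratfun_fls"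
  using R_poly unfolding polys_fls_def by blast

lemma R_elim:
  assumes "x \<in> ratfun_fls"
  obtains p q where "q \<noteq> 0" "x = poly_fls p / poly_fls q"
  using assms unfolding ratfun_fls_def by blast

lemma R_intro: "q \<noteq> 0 \<Longrightarrow> poly_fls p / poly_fls q \<in> ratfun_fls"
  unfolding ratfun_fls_def by blast

lemma R_add: assumes "x \<in> ratfun_fls" "y \<in> ratfun_fls" shows "x + y \<in> ratfun_fls"
proof -
  obtain p q where pq: "q \<noteq> 0" "x = poly_fls p / poly_fls q" using assms(1) by (rule R_elim)
  obtain p' q' where pq': "q' \<noteq> 0" "y = poly_fls p' / poly_fls q'" using assms(2) by (rule R_elim)
  have "x + y = poly_fls (p*q' + p'*q) / poly_fls (q*q')"
    using pq pq' by (simp add: poly_fls_add poly_fls_mult poly_fls_eq0 field_simps)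
  moreover have "q*q' \<noteq> 0" using pq pq' by simp
  ultimately show ?thesis using R_intro by metis
qed

lemma R_mult: assumes "x \<in> ratfun_fls" "y \<in> ratfun_fls" shows "x * y \<in> ratfun_fls"
proof -
  obtain p q where pq: "q \<noteq> 0" "x = poly_fls p / poly_fls q" using assms(1) by (rule R_elim)
  obtain p' q' where pq': "q' \<noteq> 0" "y = poly_fls p' / poly_fls q'" using assms(2) by (rule R_elim)
  have "x * y = poly_fls (p*p') / poly_fls (q*q')"
    using pq pq' by (simp add: poly_fls_mult)
  moreover have "q*q' \<noteq> 0" using pq pq' by simp
  ultimately show ?thesis using R_intro by metis
qed

lemma R_uminus: assumes "x \<in> ratfun_fls" shows "- x \<in> ratfun_fls"
  using R_mult[OF R_const[of "-1"] assms] by (simp add: fls_const_uminus[symmetric])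

lemma R_diff: assumes "x \<in> ratfun_fls" "y \<in> ratfun_fls" shows "x - y \<in> ratfun_fls"
  using R_add[OF assms(1) R_uminus[OF assms(2)]] by simp

lemma R_inverse: assumes "x \<in> ratfun_fls" shows "inverse x \<in> ratfun_fls"
proof -
  obtain p q where pq: "q \<noteq> 0" "x = poly_fls p / poly_fls q" using assms(1) by (rule R_elim)
  show ?thesis
  proof (cases "p = 0")
    case True then show ?thesis using pq R_const[of 0] by simp
  next
    case False
    have "inverse x = poly_fls q / poly_fls p" using pq by simp
    then show ?thesis using R_intro False by metis
  qed
qed

lemma R_divide: assumes "x \<in> ratfun_fls" "y \<in> ratfun_fls" shows "x / y \<in> ratfun_fls"
  using R_mult[OF assms(1) R_inverse[OF assms(2)]] by (simp add: field_simps)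

lemma sq_descent:
  fixes D :: "'a::field poly"
  shows "D * (q * q) = p * p \<Longrightarrow> q \<noteq> 0 \<Longrightarrow> \<exists>r. D = r * r"
proof (induction "degree q" arbitrary: p q rule: less_induct)
  case less
  define r where "r = p div q"
  define t where "t = p mod q"
  have pt: "p = q * r + t" unfolding r_def t_def by (metis div_mult_mod_eq mult.commute)
  show ?case
  proof (cases "t = 0")
    case True
    have "(q * q) * D = (q * q) * (r * r)" using less.prems pt True by (simp add: algebra_simps)
    hence "D = r * r" using less.prems by simp
    then show ?thesis by blast
  next
    case False
    have "degree t < degree q" using degree_mod_less[of q p] less.prems False t_def by auto
    moreover have "D * (t * t) = (D * q - p * r) * (D * q - p * r)"
    proof -
      have "D * (t * t) = D * (p*p) - 2 * D * p * q * r + (D * (q * q)) * r * r"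
        using pt by (simp add: algebra_simps)
      also have "\<dots> = D * (D * (q*q)) - 2 * D * p * q * r + (p * p) * r * r"
        using less.prems by simp
      also have "\<dots> = (D * q - p * r) * (D * q - p * r)" by (simp add: algebra_simps)
      finally show ?thesis .
    qed
    ultimately show ?thesis using less.hyps False by blast
  qed
qed

lemma s_notin:
  fixes D :: "'a::field poly"
  assumes sq: "s * s = poly_fls D" and nonsq: "\<not> (\<exists>q. D = q * q)"
  shows "s \<notin> ratfun_fls"
proof
  assume "s \<in> ratfun_fls"
  then obtain p q where pq: "q \<noteq> 0" "s = poly_fls p / poly_fls q" by (rule R_elim)
  have Q: "poly_fls q \<noteq> 0" using pq poly_fls_eq0 by blast
  have "s * poly_fls q = poly_fls p" using pq Q by simp
  hence "(s * poly_fls q) * (s * poly_fls q) = poly_fls p * poly_fls p" by simp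
  hence "poly_fls (D * (q * q)) = poly_fls (p * p)"
    by (simp add: poly_fls_mult sq[symmetric] algebra_simps)
  hence eq: "D * (q * q) = p * p" by (rule poly_fls_inj)
  then show False using sq_descent[of D q p] pq nonsq by blast
qed




lemma rep_unique:
  assumes S: "s \<notin> ratfun_fls"
    and R: "a \<in> ratfun_fls" "b \<in> ratfun_fls" "a' \<in> ratfun_fls" "b' \<in> ratfun_fls"
    and eq: "a + b * s = a' + b' * s"
  shows "a = a' \<and> b = b'"
proof (cases "b = b'")
  case True then show ?thesis using eq by simp
next
  case False
  have "(b - b') * s = a' - a" using eq by (simp add: algebra_simps)
  hence "s = (a' - a) / (b - b')" using False by (simp add: field_simps)
  hence "s \<in> ratfun_fls" using R by (metis R_diff R_divide)
  with S show ?thesis by blast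
qed

lemma sigma_eq:
  assumes S: "s \<notin> ratfun_fls" and R: "a \<in> ratfun_fls" "b \<in> ratfun_fls"
  shows "sigma s (a + b * s) = a - b * s"
  unfolding sigma_def
proof (rule the_equality)
  show "\<exists>a'\<in>ratfun_fls. \<exists>b'\<in>ratfun_fls. a + b * s = a' + b' * s \<and> a - b * s = a' - b' * s"
    using R by blast
next
  fix \<beta> assume "\<exists>a'\<in>ratfun_fls. \<exists>b'\<in>ratfun_fls. a + b * s = a' + b' * s \<and> \<beta> = a' - b' * s"
  then obtain a' b' where "a' \<in> ratfun_fls" "b' \<in> ratfun_fls" "a + b * s = a' + b' * s"
    "\<beta> = a' - b' * s" by blast
  then show "\<beta> = a - b * s" using rep_unique[OF S R] by metis
qed

definition qirr :: "'a::field fls \<Rightarrow> 'a fls \<Rightarrow> bool" where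
  "qirr s x \<longleftrightarrow> (\<exists>a b. a \<in> ratfun_fls \<and> b \<in> ratfun_fls \<and> b \<noteq> 0 \<and> x = a + b * s)"

lemma qirr_notR:
  assumes S: "s \<notin> ratfun_fls" and q: "qirr s x" shows "x \<notin> ratfun_fls"
proof
  assume x: "x \<in> ratfun_fls"
  obtain a b where ab: "a \<in> ratfun_fls" "b \<in> ratfun_fls" "b \<noteq> 0" "x = a + b * s"
    using q unfolding qirr_def by blast
  hence "s = (x - a) / b" by (simp add: field_simps)
  hence "s \<in> ratfun_fls" using ab x by (metis R_diff R_divide)
  with S show False by blast
qed

lemma qirr_nonzero:
  assumes S: "s \<notin> ratfun_fls" and q: "qirr s x" shows "x \<noteq> 0"
  using qirr_notR[OF S q] R_const[of 0] by auto

lemma qirr_sigma: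
  assumes S: "s \<notin> ratfun_fls" and q: "qirr s x" shows "qirr s (sigma s x)"
proof -
  obtain a b where ab: "a \<in> ratfun_fls" "b \<in> ratfun_fls" "b \<noteq> 0" "x = a + b * s"
    using q unfolding qirr_def by blast
  have "sigma s x = a + (-b) * s" using sigma_eq[OF S ab(1,2)] ab by simp
  then show ?thesis unfolding qirr_def using ab R_uminus by fastforce
qed

lemma qirr_diff:
  assumes S: "s \<notin> ratfun_fls" and q: "qirr s x" and p: "p \<in> ratfun_fls"
  shows "qirr s (x - p) \<and> sigma s (x - p) = sigma s x - p"
proof -
  obtain a b where ab: "a \<in> ratfun_fls" "b \<in> ratfun_fls" "b \<noteq> 0" "x = a + b * s"
    using q unfolding qirr_def by blast
  have e: "x - p = (a - p) + b * s" using ab by simp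
  have ap: "a - p \<in> ratfun_fls" using ab p R_diff by blast
  have s1: "sigma s (x - p) = (a - p) - b * s" using e sigma_eq[OF S ap ab(2)] by metis
  have s2: "sigma s x = a - b * s" using ab sigma_eq[OF S ab(1,2)] by simp
  have "qirr s (x - p)" unfolding qirr_def using e ap ab by blast
  then show ?thesis using s1 s2 by simp
qed

lemma qirr_cmult:
  assumes S: "s \<notin> ratfun_fls" and q: "qirr s x" and c: "c \<in> ratfun_fls" "c \<noteq> 0"
  shows "qirr s (c * x) \<and> sigma s (c * x) = c * sigma s x"
proof -
  obtain a b where ab: "a \<in> ratfun_fls" "b \<in> ratfun_fls" "b \<noteq> 0" "x = a + b * s"
    using q unfolding qirr_def by blast
  have e: "c * x = (c * a) + (c * b) * s" using ab by (simp add: algebra_simps)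
  have cR: "c * a \<in> ratfun_fls" "c * b \<in> ratfun_fls" "c * b \<noteq> 0" using ab c R_mult by auto
  have s1: "sigma s (c * x) = c * a - (c * b) * s" using e sigma_eq[OF S cR(1,2)] by simp
  have s2: "sigma s x = a - b * s" using ab sigma_eq[OF S ab(1,2)] by simp
  have "qirr s (c * x)" unfolding qirr_def using e cR by blast
  moreover have "sigma s (c * x) = c * sigma s x" unfolding s1 s2 by (simp add: algebra_simps)
  ultimately show ?thesis by simp
qed

lemma qirr_inverse:
  assumes S: "s \<notin> ratfun_fls" and ss: "s * s \<in> ratfun_fls" and q: "qirr s x"
  shows "qirr s (inverse x) \<and> sigma s (inverse x) = inverse (sigma s x)"
proof -
  obtain a b where ab: "a \<in> ratfun_fls" "b \<in> ratfun_fls" "b \<noteq> 0" "x = a + b * s"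
    using q unfolding qirr_def by blast
  have sx: "sigma s x = a - b * s" using sigma_eq[OF S ab(1,2)] ab by simp
  have x0: "x \<noteq> 0" using qirr_nonzero[OF S q] .
  have sx0: "sigma s x \<noteq> 0" using qirr_nonzero[OF S qirr_sigma[OF S q]] .
  define N where "N = a * a - b * b * (s * s)"
  have NR: "N \<in> ratfun_fls" unfolding N_def using ab ss by (metis R_diff R_mult)
  have "N = (a + b * s) * (a - b * s)" unfolding N_def by (simp add: algebra_simps)
  hence Nf: "N = x * sigma s x" using sx ab(4) by simp
  have N0: "N \<noteq> 0" using Nf x0 sx0 by simp
  have ix: "inverse x = (a / N) + (- b / N) * s"
    using Nf N0 x0 sx0 unfolding sx by (simp add: field_simps)
  have R1: "a / N \<in> ratfun_fls" "- b / N \<in> ratfun_fls" "- b / N \<noteq> 0"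
    using ab NR N0 by (auto intro: R_divide R_uminus)
  have "sigma s (inverse x) = a / N - (- b / N) * s"
    using ix sigma_eq[OF S R1(1,2)] by simp
  also have "\<dots> = inverse (sigma s x)"
  proof -
    have "a / N - (- b / N) * s = (a + b * s) / N" by (simp add: add_divide_distrib)
    also have "\<dots> = inverse (sigma s x)" using Nf N0 x0 sx0 ab(4) by (simp add: field_simps)
    finally show ?thesis .
  qed
  finally show ?thesis using ix R1 unfolding qirr_def by blast
qed




lemma floor_add: "fls_floor (x + y) = fls_floor x + fls_floor y"
  by (rule fls_eqI) (simp add: fls_floor_nth)
lemma floor_diff: "fls_floor (x - y) = fls_floor x - fls_floor y"
  by (rule fls_eqI) (simp add: fls_floor_nth)
lemma floor_uminus: "fls_floor (- x) = - fls_floor x"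
  by (rule fls_eqI) (simp add: fls_floor_nth)
lemma floor_cmult: "fls_floor (fls_const c * x) = fls_const c * fls_floor x"
  by (rule fls_eqI) (simp add: fls_floor_nth)
lemma floor_poly: "p \<in> polys_fls \<Longrightarrow> fls_floor p = p"
  by (rule fls_eqI) (simp add: fls_floor_nth polys_fls_iff)
lemma floor_pos: "ord_pos y \<Longrightarrow> fls_floor y = 0"
  by (rule fls_eqI) (simp add: fls_floor_nth ord_pos_iff)
lemma floor_in_polys: "fls_floor x \<in> polys_fls"
  by (simp add: fls_floor_nth polys_fls_iff)
lemma floor_frac_pos: "ord_pos (x - fls_floor x)"
  by (simp add: fls_floor_nth ord_pos_iff)
lemma floor_neg: "ord_neg x \<Longrightarrow> ord_neg (fls_floor x)"
  by (auto simp: fls_floor_nth ord_neg_iff)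
lemma ord_neg_nonzero: "ord_neg x \<Longrightarrow> x \<noteq> 0"
  by (simp add: ord_neg_def)
lemma neg_minus_pos: "ord_neg x \<Longrightarrow> ord_pos y \<Longrightarrow> ord_neg (y - x)"
  by (auto simp: ord_neg_iff ord_pos_iff)
lemma inverse_neg: "ord_neg x \<Longrightarrow> ord_pos (inverse x)"
  by (simp add: ord_neg_def ord_pos_def)
lemma inverse_pos: "ord_pos x \<Longrightarrow> x \<noteq> 0 \<Longrightarrow> ord_neg (inverse x)"
  by (simp add: ord_neg_def ord_pos_def)
lemma not_pos_neg: "ord_pos x \<Longrightarrow> ord_neg x \<Longrightarrow> False"
  by (simp add: ord_neg_def ord_pos_def)
lemma subdeg_floor: "ord_neg x \<Longrightarrow> fls_subdegree x = fls_subdegree (fls_floor x)"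
proof -
  assume x: "ord_neg x"
  have f: "fls_floor x \<noteq> 0" using floor_neg[OF x] ord_neg_nonzero by blast
  have x0: "x \<noteq> 0" using x ord_neg_nonzero by blast
  have sx: "fls_subdegree x < 0" using x by (simp add: ord_neg_def)
  have e: "fls_nth (fls_floor x) (fls_subdegree x) = fls_nth x (fls_subdegree x)"
    using sx by (simp add: fls_floor_nth)
  have "fls_subdegree (fls_floor x) \<le> fls_subdegree x"
    using x0 e by (intro fls_subdegree_leI) simp
  moreover have "fls_subdegree x \<le> fls_subdegree (fls_floor x)"
    using f by (intro fls_subdegree_geI) (auto simp: fls_floor_nth)
  ultimately show ?thesis by simp
qed
lemma subdeg_cmult: "(c::'a::field) \<noteq> 0 \<Longrightarrow> fls_subdegree (fls_const c * x) = fls_subdegree x"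
proof (cases "x = 0")
  case False
  assume c: "c \<noteq> 0"
  show ?thesis using fls_subdegree_mult[OF fls_const_nonzero[OF c] False] by simp
qed simp




locale cfctx =
  fixes s \<alpha> :: "'a::field fls"
  assumes S: "s \<notin> ratfun_fls" and ss: "s * s \<in> ratfun_fls"
    and q0: "qirr s \<alpha>" and red0: "sigma_reduced s \<alpha>"
begin

abbreviation "A \<equiv> cf_alpha \<alpha>"
abbreviation "a \<equiv> cf_a \<alpha>"

lemma a_poly: "a n \<in> ratfun_fls"
  unfolding cf_a_def using R_polys floor_in_polys by blast

lemma A_Suc: "A (Suc n) = inverse (A n - a n)" by (simp add: cf_a_def)

lemma inv_all: "qirr s (A n) \<and> sigma_reduced s (A n)"
proof (induction n)
  case 0 then show ?case using q0 red0 by simp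
next
  case (Suc n)
  have q: "qirr s (A n)" and r: "sigma_reduced s (A n)" using Suc by auto
  have d: "qirr s (A n - a n) \<and> sigma s (A n - a n) = sigma s (A n) - a n"
    using qirr_diff[OF S q a_poly] .
  have i: "qirr s (A (Suc n)) \<and> sigma s (A (Suc n)) = inverse (sigma s (A n) - a n)"
    using qirr_inverse[OF S ss conjunct1[OF d]] d unfolding A_Suc by simp
  have "ord_pos (A n - a n)" unfolding cf_a_def by (rule floor_frac_pos)
  moreover have "A n - a n \<noteq> 0" using qirr_nonzero[OF S conjunct1[OF d]] .
  ultimately have n1: "ord_neg (A (Suc n))" unfolding A_Suc by (simp add: inverse_pos)
  have "ord_neg (a n)" unfolding cf_a_def using r floor_neg unfolding sigma_reduced_def by blast
  hence "ord_neg (sigma s (A n) - a n)" using r neg_minus_pos unfolding sigma_reduced_def by blast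
  hence "ord_pos (sigma s (A (Suc n)))" using i inverse_neg by simp
  then show ?case using i n1 by (simp add: sigma_reduced_def)
qed

lemma qA: "qirr s (A n)" using inv_all by blast
lemma negA: "ord_neg (A n)" using inv_all by (simp add: sigma_reduced_def)
lemma posS: "ord_pos (sigma s (A n))" using inv_all by (simp add: sigma_reduced_def)
lemma A0: "A n \<noteq> 0" using negA ord_neg_nonzero by blast
lemma negS0: "sigma s (A n) \<noteq> 0" using qirr_nonzero[OF S qirr_sigma[OF S qA]] .
lemma a_neg: "ord_neg (a n)" unfolding cf_a_def using negA floor_neg by blast
lemma a0: "a n \<noteq> 0" using a_neg ord_neg_nonzero by blast
lemma frac0: "A n - a n \<noteq> 0" using qirr_nonzero[OF S conjunct1[OF qirr_diff[OF S qA a_poly]]] .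

lemma A_rec: "A n = a n + inverse (A (Suc n))"
  using frac0[of n] unfolding A_Suc by simp
lemma S_Suc: "sigma s (A (Suc n)) = inverse (sigma s (A n) - a n)"
  using qirr_inverse[OF S ss conjunct1[OF qirr_diff[OF S qA a_poly]]]
    qirr_diff[OF S qA a_poly] unfolding A_Suc by simp
lemma subdeg_A: "fls_subdegree (A n) = fls_subdegree (a n)"
  unfolding cf_a_def using subdeg_floor negA by blast
lemma subdeg_A_neg: "fls_subdegree (A n) < 0"
  using negA by (simp add: ord_neg_def)

definition g where "g n = - inverse (sigma s (A n))"

lemma g_Suc: "g (Suc n) = a n - sigma s (A n)"
proof -
  have "sigma s (A n) - a n \<noteq> 0"
    using qirr_nonzero[OF S qirr_sigma[OF S conjunct1[OF qirr_diff[OF S qA a_poly]]]]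
      qirr_diff[OF S qA a_poly] by simp
  then show ?thesis unfolding g_def S_Suc by simp
qed

lemma floor_g: "fls_floor (g (Suc n)) = a n"
  unfolding g_Suc floor_diff floor_pos[OF posS]
  using floor_poly[OF floor_in_polys] by (simp add: cf_a_def)

lemma g_rec: "g (Suc n) = a n + inverse (g n)"
  unfolding g_Suc using negS0[of n] by (simp add: g_def)

end



declare cf_alpha.simps(2)[simp del]

context cfctx begin

lemma fwd:
  fixes e :: "nat \<Rightarrow> 'a" and l m :: nat
  assumes e0: "\<And>n. e n \<noteq> 0" and eS: "\<And>n. e (Suc n) = inverse (e n)"
    and l1: "l \<ge> 1"
    and qp: "\<And>n. n \<ge> m \<Longrightarrow> a n = fls_const (e n) * a (n + l)"
  shows "n \<ge> m \<Longrightarrow> A n = fls_const (e n) * A (n + l)"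
proof -
  define c where "c n = fls_const (e n)" for n
  have c0: "c n \<noteq> 0" for n using e0 fls_const_nonzero unfolding c_def by blast
  have cS: "c (Suc n) = inverse (c n)" for n unfolding c_def eS by (simp add: fls_inverse_const)
  define \<delta> where "\<delta> n = A n - c n * A (n + l)" for n
  have rec: "\<delta> n = - \<delta> (Suc n) / (A (Suc n) * (c (Suc n) * A (Suc n + l)))" if "n \<ge> m" for n
  proof -
    have h1: "A n = a n + inverse (A (Suc n))" by (rule A_rec)
    have h2: "A (n + l) = a (n + l) + inverse (A (Suc n + l))" using A_rec[of "n+l"] by simp
    have "c n * A (n + l) = c n * a (n + l) + c n * inverse (A (Suc n + l))"
      using h2 by (simp add: algebra_simps)
    also have "\<dots> = a n + inverse (c (Suc n) * A (Suc n + l))"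
    proof -
      have "inverse (c (Suc n) * A (Suc n + l)) = c n * inverse (A (Suc n + l))"
        by (simp only: cS inverse_mult_distrib inverse_inverse_eq)
      moreover have "a n = c n * a (n + l)" using qp[OF that] unfolding c_def .
      ultimately show ?thesis by (simp only:)
    qed
    finally have h3: "c n * A (n + l) = a n + inverse (c (Suc n) * A (Suc n + l))" .
    have nz: "A (Suc n) \<noteq> 0" "c (Suc n) * A (Suc n + l) \<noteq> 0" using A0 c0 by auto
    have "\<delta> n = inverse (A (Suc n)) - inverse (c (Suc n) * A (Suc n + l))"
      unfolding \<delta>_def h3 by (subst h1) simp
    also have "\<dots> = - \<delta> (Suc n) / (A (Suc n) * (c (Suc n) * A (Suc n + l)))"
      using nz unfolding \<delta>_def by (simp add: field_simps)
    finally show ?thesis .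
  qed
  have sdc: "fls_subdegree (c k * x) = fls_subdegree x" for k x
    unfolding c_def using subdeg_cmult e0 by blast
  have step: "\<delta> (Suc n) \<noteq> 0 \<and> fls_subdegree (\<delta> n) \<ge> fls_subdegree (\<delta> (Suc n)) + 2"
    if "n \<ge> m" "\<delta> n \<noteq> 0" for n
  proof -
    have d1: "\<delta> (Suc n) \<noteq> 0" using rec[OF that(1)] that(2) by auto
    have nz: "A (Suc n) \<noteq> 0" "c (Suc n) * A (Suc n + l) \<noteq> 0" using A0 c0 by auto
    have "fls_subdegree (\<delta> n) = fls_subdegree (\<delta> (Suc n)) - (fls_subdegree (A (Suc n)) + fls_subdegree (A (Suc n + l)))"
      using d1 nz unfolding rec[OF that(1)] by (simp add: divide_inverse sdc c_def)
    moreover have "fls_subdegree (A (Suc n)) < 0" "fls_subdegree (A (Suc n + l)) < 0"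
      using subdeg_A_neg by auto
    ultimately show ?thesis using d1 by simp
  qed
  have iter: "\<delta> (n + j) \<noteq> 0 \<and> fls_subdegree (\<delta> n) \<ge> fls_subdegree (\<delta> (n + j)) + 2 * int j"
    if "n \<ge> m" "\<delta> n \<noteq> 0" for n j
  proof (induction j)
    case 0 then show ?case using that by simp
  next
    case (Suc j)
    have "n + j \<ge> m" using that by simp
    then show ?case using step[of "n + j"] Suc by auto
  qed
  define M where "M = Min ((\<lambda>j. fls_subdegree (A j)) ` {m..<m+l})"
  have sa: "fls_subdegree (A k) = fls_subdegree (A (k + l))" if "k \<ge> m" for k
    using subdeg_A qp[OF that] e0 subdeg_cmult by metis
  have bound: "k \<ge> m \<Longrightarrow> fls_subdegree (A k) \<ge> M" for k
  proof (induction k rule: less_induct)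
    case (less k)
    show ?case
    proof (cases "k < m + l")
      case True
      then show ?thesis unfolding M_def using less.prems by (intro Min_le) auto
    next
      case False
      then have "k - l \<ge> m" "k - l < k" using l1 by auto
      then show ?thesis using less.IH[of "k - l"] sa[of "k - l"] False by simp
    qed
  qed
  have dbound: "fls_subdegree (\<delta> k) \<ge> M" if "k \<ge> m" "\<delta> k \<noteq> 0" for k
  proof (rule fls_subdegree_geI[OF that(2)])
    fix i assume i: "i < M"
    have "i < fls_subdegree (A k)" "i < fls_subdegree (A (k + l))"
      using bound[of k] bound[of "k + l"] that i by auto
    then show "fls_nth (\<delta> k) i = 0" unfolding \<delta>_def c_def by simp
  qed
  assume n: "n \<ge> m"
  show "A n = fls_const (e n) * A (n + l)"
  proof (rule ccontr)
    assume "A n \<noteq> fls_const (e n) * A (n + l)"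
    hence d: "\<delta> n \<noteq> 0" unfolding \<delta>_def c_def by simp
    define j where "j = nat (fls_subdegree (\<delta> n) - M) + 1"
    have "fls_subdegree (\<delta> n) \<ge> fls_subdegree (\<delta> (n + j)) + 2 * int j"
      and "\<delta> (n + j) \<noteq> 0" using iter[OF n d] by auto
    moreover have "fls_subdegree (\<delta> (n + j)) \<ge> M" using dbound[of "n + j"] n calculation by simp
    moreover have "fls_subdegree (\<delta> n) \<ge> M" using dbound[OF n d] .
    moreover have "int j \<ge> fls_subdegree (\<delta> n) - M + 1" unfolding j_def by simp
    ultimately show False by linarith
  qed
qed

end



context cfctx begin

lemma back_step:
  fixes e :: "nat \<Rightarrow> 'a"
  assumes e0: "\<And>n. e n \<noteq> 0" and eS: "\<And>n. e (Suc n) = inverse (e n)"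
    and h: "A (Suc n) = fls_const (e (Suc n)) * A (Suc n + l)"
  shows "A n = fls_const (e n) * A (n + l)"
proof -
  define c where "c n = fls_const (e n)" for n
  have c0: "c n \<noteq> 0" for n using e0 fls_const_nonzero unfolding c_def by blast
  have cS: "c (Suc n) = inverse (c n)" for n unfolding c_def eS by (simp add: fls_inverse_const)
  have cR: "c n \<in> ratfun_fls" for n unfolding c_def by (rule R_const)
  have h1: "A (Suc n + l) = c n * A (Suc n)"
    using h c0[of n] unfolding c_def[symmetric] cS by (simp add: field_simps)
  have sg: "sigma s (A (Suc n + l)) = c n * sigma s (A (Suc n))"
    unfolding h1 using qirr_cmult[OF S qA cR c0] by blast
  have "a (n + l) = fls_floor (g (Suc (n + l)))" using floor_g by simp
  also have "g (Suc (n + l)) = c (Suc n) * g (Suc n)"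
    unfolding g_def using sg by (simp add: cS)
  also have "fls_floor (c (Suc n) * g (Suc n)) = c (Suc n) * a n"
    unfolding c_def floor_cmult by (simp add: floor_g[unfolded c_def])
  finally have an: "a (n + l) = c (Suc n) * a n" .
  have "A (n + l) = a (n + l) + inverse (A (Suc (n + l)))" by (rule A_rec)
  also have "\<dots> = c (Suc n) * (a n + inverse (A (Suc n)))"
    using h1 an by (simp add: cS algebra_simps)
  also have "a n + inverse (A (Suc n)) = A n" by (rule A_rec[symmetric])
  finally have "A (n + l) = c (Suc n) * A n" .
  then show ?thesis using c0[of n] unfolding c_def[symmetric] by (simp add: cS)
qed

lemma all_per:
  fixes e :: "nat \<Rightarrow> 'a" and l m :: nat
  assumes e0: "\<And>n. e n \<noteq> 0" and eS: "\<And>n. e (Suc n) = inverse (e n)"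
    and l1: "l \<ge> 1"
    and qp: "\<And>n. n \<ge> m \<Longrightarrow> a n = fls_const (e n) * a (n + l)"
  shows "A n = fls_const (e n) * A (n + l)"
proof -
  have F: "k \<ge> m \<Longrightarrow> A k = fls_const (e k) * A (k + l)" for k
    using fwd[OF e0 eS l1 qp] by blast
  have "A (m - d) = fls_const (e (m - d)) * A (m - d + l)" for d
  proof (induction d)
    case 0 then show ?case using F[of m] by simp
  next
    case (Suc d)
    show ?case
    proof (cases "Suc d \<le> m")
      case True
      then have "Suc (m - Suc d) = m - d" by simp
      then show ?thesis using back_step[of e "m - Suc d" l, OF e0 eS] Suc by simp
    next
      case False
      then have "m - Suc d = m - d" by simp
      then show ?thesis using Suc by simp
    qed
  qed
  show ?thesis
  proof (cases "n \<ge> m")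
    case True then show ?thesis using F by blast
  next
    case False
    then have "n = m - (m - n)" by simp
    then show ?thesis using \<open>\<And>d. A (m - d) = _\<close>[of "m - n"] by simp
  qed
qed

lemma reflect:
  fixes e :: "nat \<Rightarrow> 'a"
  assumes e0: "\<And>n. e n \<noteq> 0" and eS: "\<And>n. e (Suc n) = inverse (e n)"
    and per: "\<And>n. A n = fls_const (e n) * A (n + l)"
    and tr: "A 1 = g 0"
  shows "Suc j < l \<Longrightarrow> g (l - j) = fls_const (e j) * A (Suc j)"
proof (induction j)
  define c where "c n = fls_const (e n)" for n
  have c0: "c n \<noteq> 0" for n using e0 fls_const_nonzero unfolding c_def by blast
  have cS: "c (Suc n) = inverse (c n)" for n unfolding c_def eS by (simp add: fls_inverse_const)
  have cR: "c n \<in> ratfun_fls" for n unfolding c_def by (rule R_const)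
  {
    case 0
    have Al: "A l = c 1 * A 0" using per[of 0] c0[of 0] unfolding c_def[symmetric]
      by (simp add: cS field_simps)
    have "sigma s (A l) = c 1 * sigma s (A 0)"
      unfolding Al using qirr_cmult[OF S qA cR c0] by blast
    then have "g l = c 0 * g 0" unfolding g_def by (simp add: cS)
    then show ?case using tr unfolding c_def by simp
  next
    case (Suc j)
    define k where "k = l - Suc j"
    have lk: "l - j = Suc k" using Suc.prems unfolding k_def by simp
    have IH: "g (Suc k) = c j * A (Suc j)" using Suc lk unfolding c_def by simp
    have ak: "a k = c j * a (Suc j)"
    proof -
      have "a k = fls_floor (g (Suc k))" using floor_g[of k] by simp
      also have "\<dots> = c j * a (Suc j)" unfolding IH c_def floor_cmult cf_a_def ..
      finally show ?thesis .
    qed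
    have "inverse (g k) = g (Suc k) - a k" using g_rec[of k] by simp
    also have "\<dots> = c j * (A (Suc j) - a (Suc j))" using IH ak by (simp add: algebra_simps)
    also have "A (Suc j) - a (Suc j) = inverse (A (Suc (Suc j)))"
      by (simp only: A_Suc[of "Suc j"] inverse_inverse_eq)
    finally have "inverse (g k) = c j * inverse (A (Suc (Suc j)))" .
    then have "g k = c (Suc j) * A (Suc (Suc j))"
      by (metis cS inverse_inverse_eq inverse_mult_distrib)
    then show ?case unfolding k_def c_def by simp
  }
qed

end



theorem mainTheorem13:
  fixes D :: "'a::field poly" and s \<alpha> :: "'a fls"
  assumes char: "(2::'a) \<noteq> 0"
    and nonsq: "\<not> (\<exists>q. D = q * q)"
    and even_deg: "even (degree D)"
    and lc_sq: "\<exists>c. lead_coeff D = c * c"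
    and sqrtD: "s * s = poly_fls D"
    and alpha_in: "\<alpha> \<in> quad_field s"
    and red: "sigma_reduced s \<alpha>"
    and trace: "\<alpha> + sigma s \<alpha> \<in> polys_fls"
    and qp: "quasi_periodic \<alpha>"
  shows "\<exists>l\<ge>1. \<forall>n. cf_a \<alpha> n = cf_a \<alpha> (n + l)"
proof -
  have S: "s \<notin> ratfun_fls" by (rule s_notin[OF sqrtD nonsq])
  have ss: "s * s \<in> ratfun_fls" unfolding sqrtD by (rule R_poly)
  obtain x y where xy: "x \<in> ratfun_fls" "y \<in> ratfun_fls" "\<alpha> = x + y * s"
    using alpha_in unfolding quad_field_def by blast
  have y0: "y \<noteq> 0"
  proof
    assume "y = 0"
    then have "sigma s \<alpha> = \<alpha>" using sigma_eq[OF S xy(1,2)] xy(3) by simp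
    then show False using red not_pos_neg unfolding sigma_reduced_def by metis
  qed
  have q0: "qirr s \<alpha>" unfolding qirr_def using xy y0 by blast
  interpret cfctx s \<alpha> using S ss q0 red by unfold_locales
  obtain m l and \<mu> :: 'a where l1: "l \<ge> 1" and mu0: "\<mu> \<noteq> 0" and
    qpn: "\<And>n. n \<ge> m \<Longrightarrow> a n = fls_const (\<mu> powi ((-1) ^ n)) * a (n + l)"
    using qp unfolding quasi_periodic_def by blast
  define e where "e n = \<mu> powi ((-1) ^ n)" for n
  have e0: "e n \<noteq> 0" for n unfolding e_def using mu0 by simp
  have eS: "e (Suc n) = inverse (e n)" for n
    unfolding e_def by (simp add: power_int_minus)
  have per: "A n = fls_const (e n) * A (n + l)" for n
    using all_per[where e=e and l=l and m=m, OF e0 eS l1] qpn unfolding e_def by blast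
  have aper: "a n = fls_const (e n) * a (n + l)" for n
    unfolding cf_a_def by (subst per) (rule floor_cmult)
  have eadd: "e (n + k) = (if even k then e n else inverse (e n))" for n k
    by (induction k) (auto simp: eS)
  show ?thesis
  proof (cases "even l")
    case False
    have "a n = a (n + 2 * l)" for n
    proof -
      have "a n = fls_const (e n) * (fls_const (e (n + l)) * a (n + l + l))"
        using aper[of n] aper[of "n + l"] by simp
      also have "\<dots> = a (n + 2 * l)" using False e0[of n]
        by (simp add: eadd fls_inverse_const[symmetric] mult_2 add.assoc)
      finally show ?thesis .
    qed
    then show ?thesis using l1 by (intro exI[of _ "2 * l"]) auto
  next
    case True
    have a0T: "a 0 = \<alpha> + sigma s \<alpha>"
    proof -
      have "a 0 = fls_floor ((\<alpha> + sigma s \<alpha>) - sigma s (A 0))" by (simp add: cf_a_def)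
      also have "\<dots> = \<alpha> + sigma s \<alpha>"
        unfolding floor_diff floor_poly[OF trace] floor_pos[OF posS] by simp
      finally show ?thesis .
    qed
    have tr: "A 1 = g 0"
    proof -
      have "A 1 = inverse (A 0 - a 0)" using A_Suc[of 0] by simp
      also have "A 0 - a 0 = - sigma s (A 0)" using a0T by simp
      finally show ?thesis unfolding g_def by (simp add: inverse_minus_eq)
    qed
    define h where "h = l div 2"
    have h1: "h \<ge> 1" "Suc (h - 1) = h" "h < l" "l - (h - 1) = Suc h"
      using True l1 unfolding h_def by (auto elim: evenE)
    have "g (Suc h) = fls_const (e (h - 1)) * A h"
      using reflect[where e=e and l=l and j="h - 1", OF e0 eS per tr] h1 by simp
    then have "a h = fls_const (e (h - 1)) * a h"
      using floor_g[of h] floor_cmult unfolding cf_a_def by metis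
    then have "(fls_const (e (h - 1)) - 1) * a h = 0" by (simp add: algebra_simps)
    then have "fls_const (e (h - 1)) = 1" using a0[of h] by simp
    then have "fls_nth (fls_const (e (h - 1))) 0 = fls_nth 1 0" by simp
    then have ej: "e (h - 1) = 1" by simp
    have "\<mu> = 1"
    proof (cases "even (h - 1)")
      case True then show ?thesis using ej unfolding e_def by simp
    next
      case False then show ?thesis using ej unfolding e_def by (simp add: power_int_minus)
    qed
    then have "a n = a (n + l)" for n using aper[of n] unfolding e_def by simp
    then show ?thesis using l1 by blast
  qed
qed



end
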